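(* Let $n\ge1$, $\mathfrak g=\mathfrak{osp}(1,2n)\subset\mathfrak{gl}(1,2n)$, and $p\ge0$. Then: (1) for all homogeneous $X_1,\ldots,X_{2p+1}\in\mathfrak g$, $\mathcal P_{2p+1}(X_1,\ldots,X_{2p+1})\in\mathfrak g$; (2) for all homogeneous $X_1,\ldots,X_{4p+1}\in\mathfrak g$, $\mathcal A_{4p+1}(X_1,\ldots,X_{4p+1})\in\mathfrak g$; (3) for all homogeneous $X_1,\ldots,X_{4p+2}\in\mathfrak g$, $\mathcal A_{4p+2}(X_1,\ldots,X_{4p+2})\in\mathfrak g$.
   Context: $V=V_{\bar0}\oplus V_{\bar1}$ with $\dim V_{\bar0}=1$, $\dim V_{\bar1}=2n$, $\mathfrak{gl}(1,2n)=\mathrm{End}(V)$ with the natural grading, products being compositions. Let $\beta$ be an even nondegenerate bilinear form on $V$, symmetric on $V_{\bar0}$, symplectic on $V_{\bar1}$, $\beta(V_{\bar0},V_{\bar1})=0$; $\mathfrak{osp}(1,2n)$ is the span of homogeneous $X\in\mathrm{End}(V)$ with $\beta(XY,Z)+(-1)^{xy}\beta(Y,XZ)=0$ for all homogeneous $Y,Z$. For homogeneous $\mathcal X=(X_1,\dots,X_m)$ and $\sigma\in\mathfrak S_m$, $\epsilon(\sigma)$ is the sign and $\epsilon(\sigma,\mathcal X)=(-1)^K$ with $K$ the number of pairs $i<j$ with $\sigma(i)>\sigma(j)$ and $X_{\sigma(i)},X_{\sigma(j)}$ both odd. $\mathcal P_m(X_1,\dots,X_m)=\sum_{\sigma\in\mathfrak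 S_m}\epsilon(\sigma,\mathcal X)X_{\sigma(1)}\cdots X_{\sigma(m)}$ and $\mathcal A_m(X_1,\dots,X_m)=\sum_\sigma\epsilon(\sigma)\epsilon(\sigma,\mathcal X)X_{\sigma(1)}\cdots X_{\sigma(m)}$. *)

theory Defs
  imports "Jordan_Normal_Form.Determinant" "HOL-Combinatorics.Permutations"
begin

(* V = K^(2n+1) with basis e_0,...,e_{2n}; e_0 spans V_0 (even), e_1..e_{2n} span V_1 (odd).
   Parity of a basis index: True = odd. *)
definition idx_par :: "nat \<Rightarrow> bool" where
  "idx_par i \<longleftrightarrow> i \<noteq> 0"

definition par_sign :: "bool \<Rightarrow> 'a::ring_1" where
  "par_sign b = (if b then -1 else 1)"

definition hom_vec :: "nat \<Rightarrow> bool \<Rightarrow> 'a::zero vec \<Rightarrow> bool" where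
  "hom_vec N p v \<longleftrightarrow> v \<in> carrier_vec N \<and> (\<forall>i<N. idx_par i \<noteq> p \<longrightarrow> v $ i = 0)"

definition hom_mat :: "nat \<Rightarrow> bool \<Rightarrow> 'a::zero mat \<Rightarrow> bool" where
  "hom_mat N p X \<longleftrightarrow> X \<in> carrier_mat N N \<and>
     (\<forall>i<N. \<forall>j<N. (idx_par i \<noteq> idx_par j) \<noteq> p \<longrightarrow> X $$ (i,j) = 0)"

definition bform :: "'a::comm_ring_1 mat \<Rightarrow> 'a vec \<Rightarrow> 'a vec \<Rightarrow> 'a" where
  "bform B u v = u \<bullet> (B *\<^sub>v v)"

definition osp_form :: "nat \<Rightarrow> 'a::comm_ring_1 mat \<Rightarrow> bool" where
  "osp_form n B \<longleftrightarrow> B \<in> carrier_mat (2*n+1) (2*n+1) \<and> det B \<noteq> 0 \<and>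
     (\<forall>i<2*n+1. \<forall>j<2*n+1. idx_par i \<noteq> idx_par j \<longrightarrow> B $$ (i,j) = 0) \<and>
     (\<forall>i<2*n+1. \<forall>j<2*n+1. \<not> idx_par i \<and> \<not> idx_par j \<longrightarrow> B $$ (i,j) = B $$ (j,i)) \<and>
     (\<forall>i<2*n+1. \<forall>j<2*n+1. idx_par i \<and> idx_par j \<longrightarrow> B $$ (i,j) = - B $$ (j,i)) \<and>
     (\<forall>i<2*n+1. idx_par i \<longrightarrow> B $$ (i,i) = 0)"

definition osp_hom :: "nat \<Rightarrow> 'a::comm_ring_1 mat \<Rightarrow> bool \<Rightarrow> 'a mat \<Rightarrow> bool" where
  "osp_hom n B x X \<longleftrightarrow> hom_mat (2*n+1) x X \<and>
     (\<forall>y z py pz. hom_vec (2*n+1) py y \<longrightarrow> hom_vec (2*n+1) pz z \<longrightarrow>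
        bform B (X *\<^sub>v y) z + par_sign (x \<and> py) * bform B y (X *\<^sub>v z) = 0)"

definition in_osp :: "nat \<Rightarrow> 'a::comm_ring_1 mat \<Rightarrow> 'a mat \<Rightarrow> bool" where
  "in_osp n B X \<longleftrightarrow> (\<exists>X0 X1. osp_hom n B False X0 \<and> osp_hom n B True X1 \<and> X = X0 + X1)"

definition mprod :: "nat \<Rightarrow> 'a::semiring_1 mat list \<Rightarrow> 'a mat" where
  "mprod N Ms = foldr (\<lambda>A C. A * C) Ms (1\<^sub>m N)"

(* Koszul sign epsilon(sigma, X); ps ! i is the parity of X_{i+1} (True = odd) *)
definition koszul_sign :: "nat \<Rightarrow> (nat \<Rightarrow> nat) \<Rightarrow> bool list \<Rightarrow> 'a::ring_1" where
  "koszul_sign m \<sigma> ps = (-1) ^ card {(i,j). i < j \<and> j < m \<and> \<sigma> j < \<sigma> i \<and> ps ! (\<sigma> i) \<and> ps ! (\<sigma> j)}"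

definition Pm :: "nat \<Rightarrow> 'a::comm_ring_1 mat list \<Rightarrow> bool list \<Rightarrow> 'a mat" where
  "Pm N Xs ps = (let m = length Xs in
     mat N N (\<lambda>(a,b). \<Sum>\<sigma>\<in>{\<sigma>. \<sigma> permutes {..<m}}.
        koszul_sign m \<sigma> ps * mprod N (map (\<lambda>i. Xs ! (\<sigma> i)) [0..<m]) $$ (a,b)))"

definition Am :: "nat \<Rightarrow> 'a::comm_ring_1 mat list \<Rightarrow> bool list \<Rightarrow> 'a mat" where
  "Am N Xs ps = (let m = length Xs in
     mat N N (\<lambda>(a,b). \<Sum>\<sigma>\<in>{\<sigma>. \<sigma> permutes {..<m}}.
        of_int (sign \<sigma>) * koszul_sign m \<sigma> ps * mprod N (map (\<lambda>i. Xs ! (\<sigma> i)) [0..<m]) $$ (a,b)))"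

definition hom_osp_tuple :: "nat \<Rightarrow> 'a::comm_ring_1 mat \<Rightarrow> 'a mat list \<Rightarrow> bool list \<Rightarrow> bool" where
  "hom_osp_tuple n B Xs ps \<longleftrightarrow> length ps = length Xs \<and>
     (\<forall>i<length Xs. osp_hom n B (ps ! i) (Xs ! i))"

end

theory Submission
  imports Defs
begin


definition sgnm :: "nat \<Rightarrow> bool \<Rightarrow> 'a::comm_ring_1 mat" where
  "sgnm N x = mat N N (\<lambda>(i,j). if i = j then par_sign (x \<and> idx_par i) else 0)"

definition Cnd :: "nat \<Rightarrow> 'a::comm_ring_1 mat \<Rightarrow> bool \<Rightarrow> 'a mat \<Rightarrow> 'a mat \<Rightarrow> bool" where
  "Cnd N B x X Y \<longleftrightarrow> transpose_mat X * B = sgnm N x * (B * Y)"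

lemma sgnm_carrier[simp]: "sgnm N x \<in> carrier_mat N N"
  by (simp add: sgnm_def)

lemma sgnm_dim[simp]: "dim_row (sgnm N x) = N" "dim_col (sgnm N x) = N"
  by (simp_all add: sgnm_def)

lemma par_sign_mult: "(par_sign a :: 'a::comm_ring_1) * par_sign b = par_sign (a \<noteq> b)"
  by (auto simp: par_sign_def)

lemma par_sign_sq[simp]: "(par_sign a :: 'a::comm_ring_1) * par_sign a = 1"
  by (auto simp: par_sign_def)

lemma par_sign_odd: "(par_sign (odd c) :: 'a::comm_ring_1) = (-1)^c"
  by (auto simp: par_sign_def)

lemma sgnm_mult_left:
  assumes A: "A \<in> carrier_mat N M" and i: "i < N" and j: "j < M"
  shows "(sgnm N x * A) $$ (i,j) = par_sign (x \<and> idx_par i) * A $$ (i,j)"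
proof -
  have "(sgnm N x * A) $$ (i,j) = (\<Sum>k\<in>{0..<N}. (if i = k then par_sign (x \<and> idx_par i) else 0) * A $$ (k,j))"
    using A i j by (simp add: sgnm_def scalar_prod_def row_def col_def)
  also have "\<dots> = (\<Sum>k\<in>{0..<N}. if k = i then par_sign (x \<and> idx_par i) * A $$ (i,j) else 0)"
    by (rule sum.cong) auto
  also have "\<dots> = par_sign (x \<and> idx_par i) * A $$ (i,j)" using i by simp
  finally show ?thesis .
qed

lemma sgnm_mult_right:
  assumes A: "A \<in> carrier_mat M N" and i: "i < M" and j: "j < N"
  shows "(A * sgnm N x) $$ (i,j) = A $$ (i,j) * par_sign (x \<and> idx_par j)"
proof -
  have "(A * sgnm N x) $$ (i,j) = (\<Sum>k\<in>{0..<N}. A $$ (i,k) * (if k = j then par_sign (x \<and> idx_par j) else 0))"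
    using A i j by (auto simp: sgnm_def scalar_prod_def row_def col_def intro!: sum.cong)
  also have "\<dots> = (\<Sum>k\<in>{0..<N}. if k = j then A $$ (i,j) * par_sign (x \<and> idx_par j) else 0)"
    by (rule sum.cong) auto
  also have "\<dots> = A $$ (i,j) * par_sign (x \<and> idx_par j)" using j by simp
  finally show ?thesis .
qed

lemma sgnm_sgnm: "sgnm N x * sgnm N y = (sgnm N (x \<noteq> y) :: 'a::comm_ring_1 mat)"
proof (rule eq_matI)
  fix i j assume i: "i < dim_row (sgnm N (x \<noteq> y) :: 'a mat)" and j: "j < dim_col (sgnm N (x \<noteq> y) :: 'a mat)"
  then have i': "i < N" and j': "j < N" by (auto simp: sgnm_def)
  show "(sgnm N x * sgnm N y) $$ (i, j) = (sgnm N (x \<noteq> y) :: 'a mat) $$ (i, j)"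
    using sgnm_mult_left[OF sgnm_carrier i' j', of x y]  i' j'
    by (auto simp: sgnm_def par_sign_def)
qed (auto simp: sgnm_def)

lemma sgnm_False: "sgnm N False = 1\<^sub>m N"
  by (rule eq_matI) (auto simp: sgnm_def par_sign_def)

lemma sgnm_comm:
  assumes Y: "hom_mat N y (Y :: 'a::comm_ring_1 mat)"
  shows "transpose_mat Y * sgnm N x = par_sign (x \<and> y) \<cdot>\<^sub>m (sgnm N x * transpose_mat Y)"
proof (rule eq_matI)
  have YC: "Y \<in> carrier_mat N N" using Y by (simp add: hom_mat_def)
  fix i j assume i: "i < dim_row (par_sign (x \<and> y) \<cdot>\<^sub>m (sgnm N x * transpose_mat Y))"
    and j: "j < dim_col (par_sign (x \<and> y) \<cdot>\<^sub>m (sgnm N x * transpose_mat Y))"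
  then have i': "i < N" and j': "j < N" using YC by (auto simp: sgnm_def)
  have l: "(transpose_mat Y * sgnm N x) $$ (i,j) = Y $$ (j,i) * par_sign (x \<and> idx_par j)"
    using sgnm_mult_right[of "transpose_mat Y" N N i j x] YC i' j' by simp
  have r: "(sgnm N x * transpose_mat Y) $$ (i,j) = par_sign (x \<and> idx_par i) * Y $$ (j,i)"
    using sgnm_mult_left[of "transpose_mat Y" N N i j x] YC i' j' by simp
  have z: "Y $$ (j,i) \<noteq> 0 \<Longrightarrow> (idx_par j \<noteq> idx_par i) = y"
    using Y i' j' by (auto simp: hom_mat_def)
  have r2: "(par_sign (x \<and> y) \<cdot>\<^sub>m (sgnm N x * transpose_mat Y)) $$ (i,j) = par_sign (x \<and> y) * (par_sign (x \<and> idx_par i) * Y $$ (j,i))"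
    using r i' j' YC by simp
  show "(transpose_mat Y * sgnm N x) $$ (i, j) = (par_sign (x \<and> y) \<cdot>\<^sub>m (sgnm N x * transpose_mat Y)) $$ (i, j)"
    unfolding l r2
  proof (cases "Y $$ (j,i) = 0")
    case False
    then have "(idx_par j \<noteq> idx_par i) = y" by (rule z)
    then show "Y $$ (j, i) * par_sign (x \<and> idx_par j) = par_sign (x \<and> y) * (par_sign (x \<and> idx_par i) * Y $$ (j, i))"
      by (cases x; cases y; cases "idx_par i"; cases "idx_par j") (auto simp: par_sign_def)
  qed simp
qed (use Y in \<open>auto simp: hom_mat_def\<close>)

lemma hom_mat_mult:
  assumes X: "hom_mat N x (X :: 'a::comm_ring_1 mat)" and Y: "hom_mat N y Y"
  shows "hom_mat N (x \<noteq> y) (X * Y)"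
proof -
  have XC: "X \<in> carrier_mat N N" and YC: "Y \<in> carrier_mat N N" using X Y by (auto simp: hom_mat_def)
  { fix i j assume i: "i < N" and j: "j < N" and p: "(idx_par i \<noteq> idx_par j) \<noteq> (x \<noteq> y)"
    have "(X * Y) $$ (i,j) = (\<Sum>k\<in>{0..<N}. X $$ (i,k) * Y $$ (k,j))"
      using XC YC i j by (simp add: scalar_prod_def row_def col_def)
    also have "\<dots> = 0"
    proof (rule sum.neutral, rule ballI)
      fix k assume k: "k \<in> {0..<N}"
      show "X $$ (i,k) * Y $$ (k,j) = 0"
      proof (cases "(idx_par i \<noteq> idx_par k) = x")
        case True
        then have "(idx_par k \<noteq> idx_par j) \<noteq> y" using p by auto
        then show ?thesis using Y k j by (auto simp: hom_mat_def)
      next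
        case False
        then show ?thesis using X k i by (auto simp: hom_mat_def)
      qed
    qed
    finally have "(X * Y) $$ (i,j) = 0" . }
  then show ?thesis using XC YC by (auto simp: hom_mat_def)
qed

lemma Cnd_mult:
  fixes B :: "'a::comm_ring_1 mat"
  assumes B: "B \<in> carrier_mat N N" and X: "X \<in> carrier_mat N N" and X': "X' \<in> carrier_mat N N"
    and Y: "hom_mat N y Y" and Y': "Y' \<in> carrier_mat N N"
    and cx: "Cnd N B x X X'" and cy: "Cnd N B y Y Y'"
  shows "Cnd N B (x \<noteq> y) (X * Y) (par_sign (x \<and> y) \<cdot>\<^sub>m (Y' * X'))"
proof -
  have YC: "Y \<in> carrier_mat N N" using Y by (simp add: hom_mat_def)
  let ?s = "par_sign (x \<and> y) :: 'a"
  have eqb: "sgnm N x * ((sgnm N y * (B * Y')) * X') = (sgnm N x * sgnm N y) * (B * (Y' * X'))"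
  proof -
    have BY: "B * Y' \<in> carrier_mat N N" using B Y' by simp
    have YX: "Y' * X' \<in> carrier_mat N N" using X' Y' by simp
    have BYX: "B * (Y' * X') \<in> carrier_mat N N" using B YX by simp
    have "(sgnm N y * (B * Y')) * X' = sgnm N y * ((B * Y') * X')"
      by (rule assoc_mult_mat[OF sgnm_carrier BY X'])
    also have "(B * Y') * X' = B * (Y' * X')" by (rule assoc_mult_mat[OF B Y' X'])
    finally have 1: "(sgnm N y * (B * Y')) * X' = sgnm N y * (B * (Y' * X'))" .
    have 2: "(sgnm N x * sgnm N y) * (B * (Y' * X')) = sgnm N x * (sgnm N y * (B * (Y' * X')))"
      by (rule assoc_mult_mat[OF sgnm_carrier sgnm_carrier BYX])
    show ?thesis unfolding 1 2 ..
  qed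
  have eqa: "(sgnm N x * transpose_mat Y) * (B * X') = sgnm N x * ((transpose_mat Y * B) * X')"
    using YC B X' by (simp add: assoc_mult_mat[of _ N N _ N _ N])
  have "transpose_mat (X * Y) * B = (transpose_mat Y * transpose_mat X) * B"
    using X YC by (simp add: transpose_mult)
  also have "\<dots> = transpose_mat Y * (transpose_mat X * B)" using X YC B by simp
  also have "\<dots> = transpose_mat Y * (sgnm N x * (B * X'))" using cx by (simp add: Cnd_def)
  also have "\<dots> = (transpose_mat Y * sgnm N x) * (B * X')" using YC B X' by (subst assoc_mult_mat[of _ N N _ N _ N]) auto
  also have "\<dots> = (?s \<cdot>\<^sub>m (sgnm N x * transpose_mat Y)) * (B * X')" by (simp add: sgnm_comm[OF Y])
  also have "\<dots> = ?s \<cdot>\<^sub>m ((sgnm N x * transpose_mat Y) * (B * X'))"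
    by (rule mult_smult_assoc_mat[of _ N N]) (use YC B X' in auto)
  also have "\<dots> = ?s \<cdot>\<^sub>m (sgnm N x * ((transpose_mat Y * B) * X'))"
    using eqa by simp
  also have "\<dots> = ?s \<cdot>\<^sub>m (sgnm N x * ((sgnm N y * (B * Y')) * X'))" using cy by (simp add: Cnd_def)
  also have "\<dots> = ?s \<cdot>\<^sub>m ((sgnm N x * sgnm N y) * (B * (Y' * X')))"
    using eqb by simp
  also have "\<dots> = sgnm N (x \<noteq> y) * (B * (?s \<cdot>\<^sub>m (Y' * X')))"
    using B Y' X' by (simp add: sgnm_sgnm mult_smult_distrib[of _ N N _ N])
  finally show ?thesis by (simp add: Cnd_def)
qed


lemma smult_mat_vec: "A \<in> carrier_mat nr nc \<Longrightarrow> v \<in> carrier_vec nc \<Longrightarrow> (k \<cdot>\<^sub>m A) *\<^sub>v v = (k::'a::comm_ring_1) \<cdot>\<^sub>v (A *\<^sub>v v)"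
  by (rule eq_vecI) (auto simp: row_smult)

lemma sgnm_vec_index:
  assumes w: "w \<in> carrier_vec N" and i: "i < N"
  shows "(sgnm N x *\<^sub>v w) $ i = (par_sign (x \<and> idx_par i) :: 'a::comm_ring_1) * w $ i"
proof -
  have "(sgnm N x *\<^sub>v w) $ i = (\<Sum>k\<in>{0..<N}. (if i = k then par_sign (x \<and> idx_par i) else 0) * w $ k)"
    using w i by (simp add: sgnm_def scalar_prod_def row_def)
  also have "\<dots> = (\<Sum>k\<in>{0..<N}. if k = i then par_sign (x \<and> idx_par i) * w $ i else 0)"
    by (rule sum.cong) auto
  also have "\<dots> = par_sign (x \<and> idx_par i) * w $ i" using i by simp
  finally show ?thesis .
qed

lemma sgnm_row:
  assumes w: "w \<in> carrier_vec N" and i: "i < N"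
  shows "row (sgnm N x) i \<bullet> w = (par_sign (x \<and> idx_par i) :: 'a::comm_ring_1) * w $ i"
  using sgnm_vec_index[OF w i, of x] i by simp

lemma sgnm_vec:
  assumes y: "hom_vec N py y" and w: "w \<in> carrier_vec N"
  shows "y \<bullet> (sgnm N x *\<^sub>v w) = (par_sign (x \<and> py) :: 'a::comm_ring_1) * (y \<bullet> w)"
proof -
  have yc: "y \<in> carrier_vec N" using y by (simp add: hom_vec_def)
  have "y \<bullet> (sgnm N x *\<^sub>v w) = (\<Sum>i\<in>{0..<N}. y $ i * (par_sign (x \<and> idx_par i) * w $ i))"
    unfolding scalar_prod_def using w by (simp add: sgnm_row)
  also have "\<dots> = (\<Sum>i\<in>{0..<N}. par_sign (x \<and> py) * (y $ i * w $ i))"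
  proof (rule sum.cong)
    fix i assume i: "i \<in> {0..<N}"
    show "y $ i * (par_sign (x \<and> idx_par i) * w $ i) = par_sign (x \<and> py) * (y $ i * w $ i)"
    proof (cases "idx_par i = py")
      case False then have "y $ i = 0" using y i by (auto simp: hom_vec_def)
      then show ?thesis by simp
    qed (simp add: ac_simps)
  qed simp
  also have "\<dots> = par_sign (x \<and> py) * (y \<bullet> w)"
    unfolding scalar_prod_def using w by (simp add: sum_distrib_left)
  finally show ?thesis .
qed

lemma bform_left:
  assumes X: "X \<in> carrier_mat N N" and B: "B \<in> carrier_mat N N" and y: "y \<in> carrier_vec N" and z: "z \<in> carrier_vec N"
  shows "bform B (X *\<^sub>v y) z = y \<bullet> ((transpose_mat X * B) *\<^sub>v z)"
proof -
  have "bform B (X *\<^sub>v y) z = (transpose_mat (transpose_mat X) *\<^sub>v y) \<bullet> (B *\<^sub>v z)"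
    by (simp add: bform_def)
  also have "\<dots> = y \<bullet> (transpose_mat X *\<^sub>v (B *\<^sub>v z))"
    by (rule transpose_vec_mult_scalar[of _ N N]) (use X B y z in auto)
  also have "\<dots> = y \<bullet> ((transpose_mat X * B) *\<^sub>v z)"
    using X B z by (simp add: assoc_mult_mat_vec[of _ N N _ N])
  finally show ?thesis .
qed

lemma bform_right:
  assumes X: "X \<in> carrier_mat N N" and B: "B \<in> carrier_mat N N" and z: "z \<in> carrier_vec N"
  shows "bform B y (X *\<^sub>v z) = y \<bullet> ((B * X) *\<^sub>v z)"
  using X B z by (simp add: bform_def assoc_mult_mat_vec[of _ N N _ N])

lemma unit_form:
  assumes M: "(M :: 'a::comm_ring_1 mat) \<in> carrier_mat N N" and i: "i < N" and j: "j < N"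
  shows "unit_vec N i \<bullet> (M *\<^sub>v unit_vec N j) = M $$ (i,j)"
proof -
  have "unit_vec N i \<bullet> (M *\<^sub>v unit_vec N j) = (M *\<^sub>v unit_vec N j) $ i"
    by (rule scalar_prod_left_unit[of "M *\<^sub>v unit_vec N j" N i]) (use M i in auto)
  also have "\<dots> = row M i \<bullet> unit_vec N j" using M i by simp
  also have "\<dots> = M $$ (i,j)" using M i j by simp
  finally show ?thesis .
qed

lemma hom_vec_unit: "i < N \<Longrightarrow> hom_vec N (idx_par i) (unit_vec N i :: 'a::zero_neq_one vec)"
  by (auto simp: hom_vec_def)

lemma osp_hom_iff:
  fixes B :: "'a::comm_ring_1 mat"
  assumes B: "B \<in> carrier_mat (2*n+1) (2*n+1)"
  shows "osp_hom n B x X \<longleftrightarrow> hom_mat (2*n+1) x X \<and> Cnd (2*n+1) B x X ((-1) \<cdot>\<^sub>m X)"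
proof -
  let ?N = "2*n+1"
  show ?thesis
  proof
    assume h: "osp_hom n B x X"
    then have hm: "hom_mat ?N x X" by (simp add: osp_hom_def)
    then have XC: "X \<in> carrier_mat ?N ?N" by (simp add: hom_mat_def)
    have "transpose_mat X * B = sgnm ?N x * (B * ((-1) \<cdot>\<^sub>m X))"
    proof (rule eq_matI)
      fix i j assume "i < dim_row (sgnm ?N x * (B * ((-1) \<cdot>\<^sub>m X)))" "j < dim_col (sgnm ?N x * (B * ((-1) \<cdot>\<^sub>m X)))"
      then have i: "i < ?N" and j: "j < ?N" using XC by auto
      have e: "bform B (X *\<^sub>v unit_vec ?N i) (unit_vec ?N j) + par_sign (x \<and> idx_par i) * bform B (unit_vec ?N i) (X *\<^sub>v unit_vec ?N j) = 0"
        using h hom_vec_unit[OF i] hom_vec_unit[OF j] unfolding osp_hom_def by blast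
      have e1: "bform B (X *\<^sub>v unit_vec ?N i) (unit_vec ?N j) = (transpose_mat X * B) $$ (i,j)"
      proof -
        have "bform B (X *\<^sub>v unit_vec ?N i) (unit_vec ?N j) = unit_vec ?N i \<bullet> ((transpose_mat X * B) *\<^sub>v unit_vec ?N j)"
          by (rule bform_left[OF XC B]) auto
        also have "\<dots> = (transpose_mat X * B) $$ (i,j)" by (rule unit_form) (use XC B i j in auto)
        finally show ?thesis .
      qed
      have e2: "bform B (unit_vec ?N i) (X *\<^sub>v unit_vec ?N j) = (B * X) $$ (i,j)"
      proof -
        have "bform B (unit_vec ?N i) (X *\<^sub>v unit_vec ?N j) = unit_vec ?N i \<bullet> ((B * X) *\<^sub>v unit_vec ?N j)"
          by (rule bform_right[OF XC B]) auto
        also have "\<dots> = (B * X) $$ (i,j)" by (rule unit_form) (use XC B i j in auto)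
        finally show ?thesis .
      qed
      have e3: "(sgnm ?N x * (B * ((-1) \<cdot>\<^sub>m X))) $$ (i,j) = par_sign (x \<and> idx_par i) * (- (B * X) $$ (i,j))"
        using sgnm_mult_left[of "B * ((-1) \<cdot>\<^sub>m X)" ?N ?N i j x] XC B i j
        by (simp add: mult_smult_distrib[of _ ?N ?N _ ?N])
      show "(transpose_mat X * B) $$ (i, j) = (sgnm ?N x * (B * ((-1) \<cdot>\<^sub>m X))) $$ (i, j)"
        unfolding e3 using e unfolding e1 e2 by (simp add: eq_neg_iff_add_eq_0 add.commute)
    qed (use XC B in auto)
    then show "hom_mat ?N x X \<and> Cnd ?N B x X ((-1) \<cdot>\<^sub>m X)" using hm by (simp add: Cnd_def)
  next
    assume h: "hom_mat ?N x X \<and> Cnd ?N B x X ((-1) \<cdot>\<^sub>m X)"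
    then have XC: "X \<in> carrier_mat ?N ?N" by (simp add: hom_mat_def)
    have c: "transpose_mat X * B = sgnm ?N x * ((-1) \<cdot>\<^sub>m (B * X))"
      using h XC B by (simp add: Cnd_def mult_smult_distrib[of _ ?N ?N _ ?N])
    show "osp_hom n B x X"
      unfolding osp_hom_def
    proof (intro conjI allI impI)
      show "hom_mat ?N x X" using h by simp
      fix y z :: "'a vec" and py pz assume y: "hom_vec ?N py y" and z: "hom_vec ?N pz z"
      have yc: "y \<in> carrier_vec ?N" and zc: "z \<in> carrier_vec ?N" using y z by (auto simp: hom_vec_def)
      have "bform B (X *\<^sub>v y) z = y \<bullet> ((sgnm ?N x * ((-1) \<cdot>\<^sub>m (B * X))) *\<^sub>v z)"
        using bform_left[OF XC B yc zc] c by simp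
      also have "\<dots> = y \<bullet> (sgnm ?N x *\<^sub>v ((-1) \<cdot>\<^sub>v ((B * X) *\<^sub>v z)))"
        using XC B zc by (simp add: assoc_mult_mat_vec[of _ ?N ?N _ ?N] smult_mat_vec[of _ ?N ?N])
      also have "\<dots> = par_sign (x \<and> py) * (- (y \<bullet> ((B * X) *\<^sub>v z)))"
        using sgnm_vec[OF y, of "(-1) \<cdot>\<^sub>v ((B * X) *\<^sub>v z)" x] XC B zc yc by simp
      finally have "bform B (X *\<^sub>v y) z = par_sign (x \<and> py) * (- (y \<bullet> ((B * X) *\<^sub>v z)))" .
      moreover have "bform B y (X *\<^sub>v z) = y \<bullet> ((B * X) *\<^sub>v z)" by (rule bform_right[OF XC B zc])
      ultimately show "bform B (X *\<^sub>v y) z + par_sign (x \<and> py) * bform B y (X *\<^sub>v z) = 0" by simp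
    qed
  qed
qed


definition cnt :: "bool list \<Rightarrow> nat" where "cnt qs = count (mset qs) True"
definition OPl :: "bool list \<Rightarrow> nat" where
  "OPl qs = card {(i,j). i < j \<and> j < length qs \<and> qs ! i \<and> qs ! j}"

lemma cnt_Cons[simp]: "cnt (q # qs) = (if q then Suc (cnt qs) else cnt qs)"
  by (simp add: cnt_def)

lemma cnt_Nil[simp]: "cnt [] = 0" by (simp add: cnt_def)

lemma cnt_card: "cnt qs = card {j. j < length qs \<and> qs ! j}"
proof -
  have "cnt qs = length (filter ((=) True) qs)" unfolding cnt_def by (induction qs) auto
  also have "\<dots> = card {j. j < length qs \<and> True = qs ! j}" by (rule length_filter_conv_card)
  finally show ?thesis by simp
qed

lemma OPl_Nil[simp]: "OPl [] = 0" by (simp add: OPl_def)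

lemma OPl_Cons: "OPl (q # qs) = (if q then cnt qs else 0) + OPl qs"
proof -
  let ?S = "{(i,j). i < j \<and> j < length (q#qs) \<and> (q#qs) ! i \<and> (q#qs) ! j}"
  let ?S' = "{(i,j). i < j \<and> j < length qs \<and> qs ! i \<and> qs ! j}"
  let ?A = "{j. j < length qs \<and> q \<and> qs ! j}"
  have fS': "finite ?S'" by (rule finite_subset[of _ "{..<length qs} \<times> {..<length qs}"]) auto
  have fA: "finite ?A" by simp
  have eq: "?S = (\<lambda>j. (0::nat, Suc j)) ` ?A \<union> (\<lambda>(i,j). (Suc i, Suc j)) ` ?S'"
  proof (intro equalityI subsetI)
    fix x assume "x \<in> ?S"
    then obtain i j where x: "x = (i,j)" and ij: "i < j" "j < Suc (length qs)" "(q#qs) ! i" "(q#qs) ! j" by auto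
    then obtain j' where j': "j = Suc j'" by (cases j) auto
    show "x \<in> (\<lambda>j. (0::nat, Suc j)) ` ?A \<union> (\<lambda>(i,j). (Suc i, Suc j)) ` ?S'"
    proof (cases i)
      case 0
      then show ?thesis using x ij j' by auto
    next
      case (Suc i')
      then have "(i', j') \<in> ?S'" using ij j' by auto
      then show ?thesis using x Suc j' by force
    qed
  next
    fix x assume "x \<in> (\<lambda>j. (0::nat, Suc j)) ` ?A \<union> (\<lambda>(i,j). (Suc i, Suc j)) ` ?S'"
    then show "x \<in> ?S" by auto
  qed
  have "OPl (q # qs) = card ((\<lambda>j. (0::nat, Suc j)) ` ?A) + card ((\<lambda>(i,j). (Suc i, Suc j)) ` ?S')"
    unfolding OPl_def eq by (subst card_Un_disjoint) (use fS' in auto)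
  also have "card ((\<lambda>j. (0::nat, Suc j)) ` ?A) = card ?A" by (rule card_image) (auto simp: inj_on_def)
  also have "card ((\<lambda>(i,j). (Suc i, Suc j)) ` ?S') = card ?S'" by (rule card_image) (auto simp: inj_on_def)
  also have "card ?A = (if q then cnt qs else 0)" by (simp add: cnt_card)
  finally show ?thesis by (simp add: OPl_def)
qed

lemma mprod_Nil[simp]: "mprod N [] = 1\<^sub>m N" by (simp add: mprod_def)
lemma mprod_Cons[simp]: "mprod N (M # Ms) = M * mprod N Ms" by (simp add: mprod_def)

lemma mprod_carrier: "set Ms \<subseteq> carrier_mat N N \<Longrightarrow> mprod N Ms \<in> carrier_mat N N"
  by (induction Ms) auto

lemma mprod_snoc:
  assumes "set Ms \<subseteq> carrier_mat N N" "(M :: 'a::semiring_1 mat) \<in> carrier_mat N N"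
  shows "mprod N (Ms @ [M]) = mprod N Ms * M"
  using assms
proof (induction Ms)
  case Nil then show ?case by simp
next
  case (Cons A Ms)
  then have "mprod N ((A # Ms) @ [M]) = A * (mprod N Ms * M)" by simp
  also have "\<dots> = (A * mprod N Ms) * M"
    using Cons.prems mprod_carrier[of Ms N] by (subst assoc_mult_mat[of _ N N _ N _ N]) auto
  finally show ?case by simp
qed

lemma smult_smult_mat: "a \<cdot>\<^sub>m (b \<cdot>\<^sub>m A) = (a * b :: 'a::comm_ring_1) \<cdot>\<^sub>m A"
  by (rule eq_matI) auto

lemma par_sign_and_odd: "(par_sign (q \<and> odd k) :: 'a::comm_ring_1) = (if q then (-1)^k else 1)"
  by (auto simp: par_sign_def)

lemma mprod_Cnd:
  fixes B :: "'a::comm_ring_1 mat"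
  assumes B: "B \<in> carrier_mat N N"
  shows "length qs = length Ms \<Longrightarrow>
    (\<forall>i<length Ms. hom_mat N (qs!i) (Ms!i) \<and> Cnd N B (qs!i) (Ms!i) ((-1) \<cdot>\<^sub>m (Ms!i))) \<Longrightarrow>
    hom_mat N (odd (cnt qs)) (mprod N Ms) \<and>
    Cnd N B (odd (cnt qs)) (mprod N Ms) (((-1)^(length Ms) * (-1)^(OPl qs)) \<cdot>\<^sub>m mprod N (rev Ms))"
proof (induction Ms arbitrary: qs)
  case Nil
  then have "qs = []" by simp
  moreover have "(1::'a) \<cdot>\<^sub>m 1\<^sub>m N = 1\<^sub>m N" by (rule eq_matI) auto
  ultimately show ?case using B by (simp add: Cnd_def sgnm_False hom_mat_def)
next
  case (Cons M Ms)
  obtain q qs' where qs: "qs = q # qs'" using Cons.prems(1) by (cases qs) auto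
  have len: "length qs' = length Ms" using Cons.prems(1) qs by simp
  have hyp: "\<forall>i<length Ms. hom_mat N (qs'!i) (Ms!i) \<and> Cnd N B (qs'!i) (Ms!i) ((-1) \<cdot>\<^sub>m (Ms!i))"
    using Cons.prems(2) qs by auto
  have hM: "hom_mat N q M" and cM: "Cnd N B q M ((-1) \<cdot>\<^sub>m M)"
    using Cons.prems(2) qs by auto
  have MC: "M \<in> carrier_mat N N" using hM by (simp add: hom_mat_def)
  have setC: "set Ms \<subseteq> carrier_mat N N"
    using hyp by (auto simp: in_set_conv_nth hom_mat_def)
  note IH = Cons.IH[OF len hyp]
  let ?c = "((-1)^(length Ms) * (-1)^(OPl qs')) :: 'a"
  let ?R = "mprod N (rev Ms)"
  have RC: "?R \<in> carrier_mat N N" using setC by (intro mprod_carrier) auto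
  have hom: "hom_mat N (q \<noteq> odd (cnt qs')) (M * mprod N Ms)"
    by (rule hom_mat_mult[OF hM]) (use IH in simp)
  have cnd: "Cnd N B (q \<noteq> odd (cnt qs')) (M * mprod N Ms) (par_sign (q \<and> odd (cnt qs')) \<cdot>\<^sub>m ((?c \<cdot>\<^sub>m ?R) * ((-1) \<cdot>\<^sub>m M)))"
    by (rule Cnd_mult[OF B MC _ _ _ cM]) (use IH MC RC in auto)
  have mat: "par_sign (q \<and> odd (cnt qs')) \<cdot>\<^sub>m ((?c \<cdot>\<^sub>m ?R) * ((-1) \<cdot>\<^sub>m M))
     = (par_sign (q \<and> odd (cnt qs')) * (?c * (-1))) \<cdot>\<^sub>m (?R * M)"
    using RC MC by (simp add: mult_smult_assoc_mat[of _ N N _ N] mult_smult_distrib[of _ N N _ N] smult_smult_mat)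
  have sc: "par_sign (q \<and> odd (cnt qs')) * (?c * (-1)) = ((-1)^(length (M # Ms)) * (-1)^(OPl qs) :: 'a)"
    unfolding qs OPl_Cons par_sign_and_odd by (simp add: power_add)
  have rv: "mprod N (rev (M # Ms)) = ?R * M"
    using setC MC by (simp add: mprod_snoc)
  have par: "odd (cnt qs) = (q \<noteq> odd (cnt qs'))" using qs by simp
  show ?case using hom cnd unfolding par mat sc rv by simp
qed




definition rv :: "nat \<Rightarrow> nat \<Rightarrow> nat" where
  "rv m i = (if i < m then m - 1 - i else i)"

lemma rv_rv[simp]: "rv m (rv m i) = i"
  by (auto simp: rv_def)

lemma rv_comp: "f \<circ> rv m \<circ> rv m = f"
  by (auto simp: fun_eq_iff)

lemma rv_permutes: "rv m permutes {..<m}"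
  unfolding permutes_def
proof (intro conjI allI impI)
  fix x :: nat assume "x \<notin> {..<m}" then show "rv m x = x" by (auto simp: rv_def)
next
  fix y show "\<exists>!x. rv m x = y"
  proof (rule ex1I[of _ "rv m y"])
    fix x assume "rv m x = y" then show "x = rv m y" by (metis rv_rv)
  qed simp
qed

lemma rev_map_upt: "rev (map f [0..<m]) = map (\<lambda>i. f (rv m i)) [0..<m]"
  by (rule nth_equalityI) (auto simp: rev_nth rv_def)

lemma sign_rv: "sign (rv m) = (-1::int)^(m div 2)"
proof (induction m rule: nat_less_induct)
  case (1 m)
  show ?case
  proof (cases m)
    case 0
    then have "rv m = id" by (auto simp: rv_def fun_eq_iff)
    then show ?thesis using 0 by simp
  next
    case (Suc m1)
    show ?thesis
    proof (cases m1)
      case 0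
      then have "rv m = id" using Suc by (auto simp: rv_def fun_eq_iff)
      then show ?thesis using 0 Suc by simp
    next
      case (Suc k)
      then have m: "m = Suc (Suc k)" using \<open>m = Suc m1\<close> by simp
      let ?mp = "map_permutation {..<k} Suc (rv k)"
      have mp_val: "?mp x = (if x \<in> Suc ` {..<k} then Suc (rv k (x - 1)) else x)" for x
      proof (cases "x \<in> Suc ` {..<k}")
        case True
        then obtain i where i: "i < k" "x = Suc i" by auto
        have "inv_into {..<k} Suc x = i" using i by (simp add: inv_into_f_f)
        then show ?thesis using True i unfolding map_permutation_def restrict_id_def by simp
      qed (simp add: map_permutation_def restrict_id_def)
      have eq: "rv m = Transposition.transpose 0 (Suc k) \<circ> ?mp"
      proof
        fix x
        show "rv m x = (Transposition.transpose 0 (Suc k) \<circ> ?mp) x"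
        proof (cases "x \<in> Suc ` {..<k}")
          case True
          then obtain i where i: "i < k" "x = Suc i" by auto
          then have "?mp x = Suc (k - 1 - i)" using mp_val[of x] True by (simp add: rv_def)
          moreover have "Suc (k - 1 - i) \<noteq> 0" "Suc (k - 1 - i) \<noteq> Suc k" using i by auto
          ultimately show ?thesis using i m by (simp add: rv_def)
        next
          case False
          then have "?mp x = x" using mp_val[of x] by simp
          moreover have "x = 0 \<or> x = Suc k \<or> x > Suc k" using False by (cases x) (auto simp: image_iff)
          ultimately show ?thesis using m by (auto simp: rv_def)
        qed
      qed
      have pk: "rv k permutes {..<k}" by (rule rv_permutes)
      have bS: "bij_betw Suc {..<k} (Suc ` {..<k})" by (simp add: bij_betw_def)
      have mpp: "?mp permutes (Suc ` {..<k})" by (rule map_permutation_permutes[OF bS pk])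
      have "sign (rv m) = sign (Transposition.transpose (0::nat) (Suc k)) * sign ?mp"
        unfolding eq by (rule sign_compose[OF permutation_swap_id permutes_imp_permutation[OF _ mpp]]) simp
      also have "sign ?mp = sign (rv k)" by (rule sign_map_permutation) (use pk in auto)
      also have "sign (rv k) = (-1)^(k div 2)" using 1 m by simp
      finally show ?thesis using m by (simp add: sign_swap_id)
    qed
  qed
qed

definition Kset :: "nat \<Rightarrow> (nat \<Rightarrow> nat) \<Rightarrow> bool list \<Rightarrow> (nat \<times> nat) set" where
  "Kset m \<sigma> ps = {(i,j). i < j \<and> j < m \<and> \<sigma> j < \<sigma> i \<and> ps ! (\<sigma> i) \<and> ps ! (\<sigma> j)}"

lemma koszul_Kset: "koszul_sign m \<sigma> ps = (-1) ^ card (Kset m \<sigma> ps)"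
  by (simp add: koszul_sign_def Kset_def)

lemma rv_inj_pairs: "inj_on (\<lambda>(i,j). (rv m j, rv m i)) A"
proof (rule inj_onI)
  fix x y assume "x \<in> A" "y \<in> A" and e: "(\<lambda>(i,j). (rv m j, rv m i)) x = (\<lambda>(i,j). (rv m j, rv m i)) y"
  obtain a b where x: "x = (a,b)" by (cases x)
  obtain c d where y: "y = (c,d)" by (cases y)
  have "rv m b = rv m d" "rv m a = rv m c" using e x y by auto
  then have "rv m (rv m b) = rv m (rv m d)" "rv m (rv m a) = rv m (rv m c)" by simp_all
  then show "x = y" using x y by simp
qed

lemma OPl_rev: "OPl (rev qs) = OPl qs"
proof -
  let ?L = "length qs"
  let ?S = "{(i,j). i < j \<and> j < ?L \<and> qs ! i \<and> qs ! j}"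
  let ?T = "{(i,j). i < j \<and> j < ?L \<and> rev qs ! i \<and> rev qs ! j}"
  let ?h = "\<lambda>(i,j). (rv ?L j, rv ?L i)"
  have hTS: "?h ` ?T = ?S"
  proof (intro equalityI subsetI)
    fix x assume "x \<in> ?h ` ?T"
    then obtain i j where ij: "x = ?h (i,j)" "i < j" "j < ?L" "rev qs ! i" "rev qs ! j" by blast
    have "rev qs ! i = qs ! (?L - Suc i)" "rev qs ! j = qs ! (?L - Suc j)" using ij by (simp_all add: rev_nth)
    moreover have "?L - Suc j < ?L - Suc i" "?L - Suc i < ?L" using ij by linarith+
    ultimately show "x \<in> ?S" using ij by (simp add: rv_def)
  next
    fix x assume x: "x \<in> ?S"
    then obtain a b where ab: "x = (a,b)" "a < b" "b < ?L" "qs ! a" "qs ! b" by blast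
    have "rev qs ! (?L - Suc a) = qs ! a" "rev qs ! (?L - Suc b) = qs ! b" using ab by (simp_all add: rev_nth)
    moreover have "?L - Suc b < ?L - Suc a" "?L - Suc a < ?L" using ab by linarith+
    ultimately have "(rv ?L b, rv ?L a) \<in> ?T" using ab by (simp add: rv_def)
    moreover have "x = ?h (rv ?L b, rv ?L a)" using ab by simp
    ultimately show "x \<in> ?h ` ?T" by blast
  qed
  then have "card ?S = card (?h ` ?T)" by simp
  also have "\<dots> = card ?T" by (rule card_image[OF rv_inj_pairs])
  finally show ?thesis by (simp add: OPl_def)
qed

lemma kos_rev:
  assumes s: "\<sigma> permutes {..<m}"
  shows "card (Kset m (\<sigma> \<circ> rv m) ps) + card (Kset m \<sigma> ps) = OPl (map (\<lambda>i. ps ! \<sigma> i) [0..<m])"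
proof -
  let ?T = "Kset m (\<sigma> \<circ> rv m) ps"
  let ?T' = "{(a,b). a < b \<and> b < m \<and> \<sigma> a < \<sigma> b \<and> ps ! \<sigma> a \<and> ps ! \<sigma> b}"
  let ?K = "Kset m \<sigma> ps"
  let ?O = "{(a,b). a < b \<and> b < m \<and> ps ! \<sigma> a \<and> ps ! \<sigma> b}"
  let ?h = "\<lambda>(i,j). (rv m j, rv m i)"
  have inj: "inj \<sigma>" using s by (rule permutes_inj)
  have hT: "?h ` ?T = ?T'"
  proof (intro equalityI subsetI)
    fix x assume "x \<in> ?h ` ?T"
    then obtain i j where ij: "x = ?h (i,j)" "i < j" "j < m" "\<sigma> (rv m j) < \<sigma> (rv m i)"
       "ps ! \<sigma> (rv m i)" "ps ! \<sigma> (rv m j)"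
      unfolding Kset_def by auto
    have "rv m j < rv m i" "rv m i < m" using ij by (simp_all add: rv_def)
    then show "x \<in> ?T'" using ij by simp
  next
    fix x assume x: "x \<in> ?T'"
    then obtain a b where ab: "x = (a,b)" "a < b" "b < m" "\<sigma> a < \<sigma> b" "ps ! \<sigma> a" "ps ! \<sigma> b" by blast
    have "rv m b < rv m a" "rv m a < m" using ab by (simp_all add: rv_def)
    then have "(rv m b, rv m a) \<in> ?T" using ab by (simp add: Kset_def)
    moreover have "x = ?h (rv m b, rv m a)" using ab by simp
    ultimately show "x \<in> ?h ` ?T" by blast
  qed
  have c1: "card ?T = card ?T'"
  proof -
    have "card ?T' = card (?h ` ?T)" using hT by simp
    also have "\<dots> = card ?T" by (rule card_image[OF rv_inj_pairs])
    finally show ?thesis by simp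
  qed
  have fin: "finite ?O" by (rule finite_subset[of _ "{..<m} \<times> {..<m}"]) auto
  have un: "?O = ?T' \<union> ?K"
  proof (intro equalityI subsetI)
    fix x assume "x \<in> ?O"
    then obtain a b where ab: "x = (a,b)" "a < b" "b < m" "ps ! \<sigma> a" "ps ! \<sigma> b" by blast
    have "\<sigma> a \<noteq> \<sigma> b"
    proof
      assume "\<sigma> a = \<sigma> b" then have "a = b" using inj by (simp add: inj_eq)
      then show False using ab by simp
    qed
    then have "\<sigma> a < \<sigma> b \<or> \<sigma> b < \<sigma> a" by linarith
    then show "x \<in> ?T' \<union> ?K" using ab unfolding Kset_def by blast
  next
    fix x assume "x \<in> ?T' \<union> ?K"
    then show "x \<in> ?O" unfolding Kset_def by blast
  qed
  have fT': "finite ?T'" by (rule finite_subset[OF _ fin]) blast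
  have fK: "finite ?K" by (rule finite_subset[OF _ fin]) (unfold Kset_def, blast)
  have dis: "?T' \<inter> ?K = {}" unfolding Kset_def by auto
  have "card ?O = card ?T' + card ?K"
    unfolding un by (rule card_Un_disjoint[OF fT' fK dis])
  moreover have "OPl (map (\<lambda>i. ps ! \<sigma> i) [0..<m]) = card ?O"
    unfolding OPl_def by (rule arg_cong[of _ _ card]) auto
  ultimately show ?thesis using c1 by simp
qed



lemma tm_entry:
  assumes "A \<in> carrier_mat N N" "(B :: 'a::comm_ring_1 mat) \<in> carrier_mat N N" "i < N" "j < N"
  shows "(transpose_mat A * B) $$ (i,j) = (\<Sum>k\<in>{0..<N}. A $$ (k,i) * B $$ (k,j))"
  using assms by (simp add: scalar_prod_def)

lemma mm_entry:
  assumes "A \<in> carrier_mat N N" "(B :: 'a::comm_ring_1 mat) \<in> carrier_mat N N" "i < N" "j < N"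
  shows "(A * B) $$ (i,j) = (\<Sum>k\<in>{0..<N}. A $$ (i,k) * B $$ (k,j))"
  using assms by (simp add: scalar_prod_def)

lemma Cnd_sum:
  fixes B :: "'a::comm_ring_1 mat" and f :: "'b \<Rightarrow> 'a"
  assumes B: "B \<in> carrier_mat N N"
    and h: "\<And>\<sigma>. \<sigma> \<in> S \<Longrightarrow> M \<sigma> \<in> carrier_mat N N \<and> M' \<sigma> \<in> carrier_mat N N \<and> Cnd N B x (M \<sigma>) (M' \<sigma>)"
  shows "Cnd N B x (mat N N (\<lambda>(a,b). \<Sum>\<sigma>\<in>S. f \<sigma> * M \<sigma> $$ (a,b))) (mat N N (\<lambda>(a,b). \<Sum>\<sigma>\<in>S. f \<sigma> * M' \<sigma> $$ (a,b)))"
  unfolding Cnd_def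
proof (rule eq_matI)
  let ?P = "mat N N (\<lambda>(a,b). \<Sum>\<sigma>\<in>S. f \<sigma> * M \<sigma> $$ (a,b))"
  let ?Q = "mat N N (\<lambda>(a,b). \<Sum>\<sigma>\<in>S. f \<sigma> * M' \<sigma> $$ (a,b))"
  fix i j assume "i < dim_row (sgnm N x * (B * ?Q))" "j < dim_col (sgnm N x * (B * ?Q))"
  then have i: "i < N" and j: "j < N" using B by auto
  have "(transpose_mat ?P * B) $$ (i,j) = (\<Sum>k\<in>{0..<N}. (\<Sum>\<sigma>\<in>S. f \<sigma> * M \<sigma> $$ (k,i)) * B $$ (k,j))"
    using tm_entry[of ?P N B i j] B i j by simp
  also have "\<dots> = (\<Sum>k\<in>{0..<N}. \<Sum>\<sigma>\<in>S. f \<sigma> * (M \<sigma> $$ (k,i) * B $$ (k,j)))"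
    by (simp add: sum_distrib_right mult.assoc)
  also have "\<dots> = (\<Sum>\<sigma>\<in>S. \<Sum>k\<in>{0..<N}. f \<sigma> * (M \<sigma> $$ (k,i) * B $$ (k,j)))"
    by (rule sum.swap)
  also have "\<dots> = (\<Sum>\<sigma>\<in>S. f \<sigma> * (transpose_mat (M \<sigma>) * B) $$ (i,j))"
  proof (rule sum.cong[OF refl])
    fix \<sigma> assume "\<sigma> \<in> S"
    then have "M \<sigma> \<in> carrier_mat N N" using h by blast
    then show "(\<Sum>k\<in>{0..<N}. f \<sigma> * (M \<sigma> $$ (k,i) * B $$ (k,j))) = f \<sigma> * (transpose_mat (M \<sigma>) * B) $$ (i,j)"
      using tm_entry[of "M \<sigma>" N B i j] B i j by (simp add: sum_distrib_left)
  qed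
  also have "\<dots> = (\<Sum>\<sigma>\<in>S. f \<sigma> * (sgnm N x * (B * M' \<sigma>)) $$ (i,j))"
    using h by (simp add: Cnd_def)
  also have "\<dots> = (\<Sum>\<sigma>\<in>S. \<Sum>k\<in>{0..<N}. par_sign (x \<and> idx_par i) * (f \<sigma> * (B $$ (i,k) * M' \<sigma> $$ (k,j))))"
  proof (rule sum.cong[OF refl])
    fix \<sigma> assume "\<sigma> \<in> S"
    then have M': "M' \<sigma> \<in> carrier_mat N N" using h by blast
    then have "(sgnm N x * (B * M' \<sigma>)) $$ (i,j) = par_sign (x \<and> idx_par i) * (B * M' \<sigma>) $$ (i,j)"
      using B i j by (intro sgnm_mult_left) auto
    also have "(B * M' \<sigma>) $$ (i,j) = (\<Sum>k\<in>{0..<N}. B $$ (i,k) * M' \<sigma> $$ (k,j))"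
      using mm_entry[OF B M' i j] .
    finally show "f \<sigma> * (sgnm N x * (B * M' \<sigma>)) $$ (i,j) = (\<Sum>k\<in>{0..<N}. par_sign (x \<and> idx_par i) * (f \<sigma> * (B $$ (i,k) * M' \<sigma> $$ (k,j))))"
      by (simp add: sum_distrib_left ac_simps)
  qed
  also have "\<dots> = (\<Sum>k\<in>{0..<N}. \<Sum>\<sigma>\<in>S. par_sign (x \<and> idx_par i) * (f \<sigma> * (B $$ (i,k) * M' \<sigma> $$ (k,j))))"
    by (rule sum.swap)
  also have "\<dots> = par_sign (x \<and> idx_par i) * (\<Sum>k\<in>{0..<N}. B $$ (i,k) * ?Q $$ (k,j))"
    using j by (simp add: sum_distrib_left sum_distrib_right ac_simps)
  also have "\<dots> = (sgnm N x * (B * ?Q)) $$ (i,j)"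
  proof -
    have e1: "(sgnm N x * (B * ?Q)) $$ (i,j) = par_sign (x \<and> idx_par i) * (B * ?Q) $$ (i,j)"
      by (rule sgnm_mult_left) (use B i j in auto)
    have e2: "(B * ?Q) $$ (i,j) = (\<Sum>k\<in>{0..<N}. B $$ (i,k) * ?Q $$ (k,j))"
      by (rule mm_entry) (use B i j in auto)
    show ?thesis unfolding e1 e2 ..
  qed
  finally show "(transpose_mat ?P * B) $$ (i,j) = (sgnm N x * (B * ?Q)) $$ (i,j)" .
qed (use B in auto)


lemma osp_hom_zero:
  fixes B :: "'a::comm_ring_1 mat"
  assumes B: "B \<in> carrier_mat (2*n+1) (2*n+1)"
  shows "osp_hom n B b (0\<^sub>m (2*n+1) (2*n+1))"
  unfolding osp_hom_iff[OF B]
proof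
  show "hom_mat (2*n+1) b (0\<^sub>m (2*n+1) (2*n+1) :: 'a mat)" by (simp add: hom_mat_def)
  show "Cnd (2*n+1) B b (0\<^sub>m (2*n+1) (2*n+1)) ((-1) \<cdot>\<^sub>m 0\<^sub>m (2*n+1) (2*n+1))"
    unfolding Cnd_def using B by simp
qed

lemma main_gen:
  fixes B :: "'a::comm_ring_1 mat" and W :: "(nat \<Rightarrow> nat) \<Rightarrow> 'a"
  assumes B: "B \<in> carrier_mat (2*n+1) (2*n+1)"
    and tup: "hom_osp_tuple n B Xs ps"
    and W: "\<And>\<tau>. \<tau> permutes {..<length Xs} \<Longrightarrow> W (\<tau> \<circ> rv (length Xs)) * (-1)^(length Xs) = - W \<tau>"
  shows "in_osp n B (mat (2*n+1) (2*n+1) (\<lambda>(a,b). \<Sum>\<sigma>\<in>{\<sigma>. \<sigma> permutes {..<length Xs}}.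
            W \<sigma> * koszul_sign (length Xs) \<sigma> ps * mprod (2*n+1) (map (\<lambda>i. Xs ! (\<sigma> i)) [0..<length Xs]) $$ (a,b)))"
proof -
  define N where "N = 2*n+1"
  define m where "m = length Xs"
  define Perms where "Perms = {\<sigma>. \<sigma> permutes {..<m}}"
  define Mf where "Mf \<sigma> = mprod N (map (\<lambda>i. Xs ! (\<sigma> i)) [0..<m])" for \<sigma>
  define qf where "qf \<sigma> = map (\<lambda>i. ps ! (\<sigma> i)) [0..<m]" for \<sigma>
  define xt where "xt = odd (cnt ps)"
  define cf where "cf \<sigma> = ((-1)^m * (-1)^(OPl (qf \<sigma>)) :: 'a)" for \<sigma>
  define f where "f \<sigma> = W \<sigma> * koszul_sign m \<sigma> ps" for \<sigma>
  define P where "P = mat N N (\<lambda>(a,b). \<Sum>\<sigma>\<in>Perms. f \<sigma> * Mf \<sigma> $$ (a,b))"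
  define Q where "Q = mat N N (\<lambda>(a,b). \<Sum>\<sigma>\<in>Perms. f \<sigma> * (cf \<sigma> \<cdot>\<^sub>m Mf (\<sigma> \<circ> rv m)) $$ (a,b))"
  have lenps: "length ps = m" using tup by (simp add: hom_osp_tuple_def m_def)
  have BN: "B \<in> carrier_mat N N" using B by (simp add: N_def)
  have Wm: "\<And>\<tau>. \<tau> \<in> Perms \<Longrightarrow> W (\<tau> \<circ> rv m) * (-1)^m = - W \<tau>" using W by (simp add: Perms_def m_def)
  have rvP: "\<sigma> \<circ> rv m \<in> Perms" if "\<sigma> \<in> Perms" for \<sigma>
    using permutes_compose[OF rv_permutes, of \<sigma> m] that by (simp add: Perms_def)
  have each: "hom_mat N xt (Mf \<sigma>) \<and> Cnd N B xt (Mf \<sigma>) (cf \<sigma> \<cdot>\<^sub>m Mf (\<sigma> \<circ> rv m))" if s: "\<sigma> \<in> Perms" for \<sigma>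
  proof -
    let ?Ms = "map (\<lambda>i. Xs ! (\<sigma> i)) [0..<m]"
    have sp: "\<sigma> permutes {..<m}" using s by (simp add: Perms_def)
    have lt: "\<sigma> i < m" if "i < m" for i using permutes_in_image[OF sp, of i] that by simp
    have hyp: "\<forall>i<length ?Ms. hom_mat N (qf \<sigma> ! i) (?Ms ! i) \<and> Cnd N B (qf \<sigma> ! i) (?Ms ! i) ((-1) \<cdot>\<^sub>m (?Ms ! i))"
    proof (intro allI impI)
      fix i assume "i < length ?Ms"
      then have i: "i < m" by simp
      have "osp_hom n B (ps ! (\<sigma> i)) (Xs ! (\<sigma> i))" using tup lt[OF i] by (simp add: hom_osp_tuple_def m_def)
      then show "hom_mat N (qf \<sigma> ! i) (?Ms ! i) \<and> Cnd N B (qf \<sigma> ! i) (?Ms ! i) ((-1) \<cdot>\<^sub>m (?Ms ! i))"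
        using osp_hom_iff[OF B] i by (simp add: qf_def N_def)
    qed
    have lq: "length (qf \<sigma>) = length ?Ms" by (simp add: qf_def)
    have r: "hom_mat N (odd (cnt (qf \<sigma>))) (mprod N ?Ms) \<and>
      Cnd N B (odd (cnt (qf \<sigma>))) (mprod N ?Ms) (((-1)^(length ?Ms) * (-1)^(OPl (qf \<sigma>))) \<cdot>\<^sub>m mprod N (rev ?Ms))"
      by (rule mprod_Cnd[OF BN lq hyp])
    have c: "cnt (qf \<sigma>) = cnt ps"
    proof -
      have "qf \<sigma> = permute_list \<sigma> ps" by (simp add: qf_def permute_list_def lenps)
      then show ?thesis using mset_permute_list[of \<sigma> ps] sp lenps by (simp add: cnt_def)
    qed
    have rv: "rev ?Ms = map (\<lambda>i. Xs ! ((\<sigma> \<circ> rv m) i)) [0..<m]" by (simp add: rev_map_upt)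
    show ?thesis using r unfolding c rv by (simp add: Mf_def xt_def cf_def)
  qed
  have carrM: "Mf \<sigma> \<in> carrier_mat N N" if "\<sigma> \<in> Perms" for \<sigma>
    using each[OF that] by (simp add: hom_mat_def)
  have CQ: "Cnd N B xt P Q"
    unfolding P_def Q_def
  proof (rule Cnd_sum[OF BN])
    fix \<sigma> assume s: "\<sigma> \<in> Perms"
    show "Mf \<sigma> \<in> carrier_mat N N \<and> cf \<sigma> \<cdot>\<^sub>m Mf (\<sigma> \<circ> rv m) \<in> carrier_mat N N \<and> Cnd N B xt (Mf \<sigma>) (cf \<sigma> \<cdot>\<^sub>m Mf (\<sigma> \<circ> rv m))"
      using carrM[OF s] carrM[OF rvP[OF s]] each[OF s] by simp
  qed
  have sgn: "f (\<tau> \<circ> rv m) * cf (\<tau> \<circ> rv m) = - f \<tau>" if t: "\<tau> \<in> Perms" for \<tau>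
  proof -
    have tp: "\<tau> permutes {..<m}" using t by (simp add: Perms_def)
    define K1 where "K1 = card (Kset m (\<tau> \<circ> rv m) ps)"
    define K0 where "K0 = card (Kset m \<tau> ps)"
    define Oc where "Oc = OPl (qf \<tau>)"
    have KO: "K1 + K0 = Oc" unfolding K1_def K0_def Oc_def qf_def by (rule kos_rev[OF tp])
    have qr: "qf (\<tau> \<circ> rv m) = rev (qf \<tau>)" by (simp add: qf_def rev_map_upt)
    have O2: "OPl (qf (\<tau> \<circ> rv m)) = Oc" unfolding qr Oc_def by (rule OPl_rev)
    have "f (\<tau> \<circ> rv m) * cf (\<tau> \<circ> rv m) = (W (\<tau> \<circ> rv m) * (-1)^m) * ((-1)^K1 * (-1)^Oc)"
      unfolding f_def cf_def O2 koszul_Kset K1_def by (simp add: ac_simps)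
    also have "(-1)^K1 * (-1)^Oc = ((-1)^K0 :: 'a)"
    proof -
      have "((-1)^K1 * (-1)^Oc :: 'a) = (-1)^(2*K1) * (-1)^K0" unfolding KO[symmetric] by (simp add: power_add)
      also have "\<dots> = (-1)^K0" by (simp add: power_mult)
      finally show ?thesis .
    qed
    also have "W (\<tau> \<circ> rv m) * (-1)^m = - W \<tau>" by (rule Wm[OF t])
    also have "- W \<tau> * (-1)^K0 = - f \<tau>" by (simp add: f_def koszul_Kset K0_def)
    finally show ?thesis .
  qed
  have QP: "Q = (-1) \<cdot>\<^sub>m P"
  proof (rule eq_matI)
    fix a b assume "a < dim_row ((-1) \<cdot>\<^sub>m P)" "b < dim_col ((-1) \<cdot>\<^sub>m P)"
    then have a: "a < N" and b: "b < N" by (auto simp: P_def)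
    have "Q $$ (a,b) = (\<Sum>\<sigma>\<in>Perms. f \<sigma> * (cf \<sigma> * Mf (\<sigma> \<circ> rv m) $$ (a,b)))"
      unfolding Q_def using a b
    proof (simp, intro sum.cong refl)
      fix \<sigma> assume "\<sigma> \<in> Perms"
      then have "Mf (\<sigma> \<circ> rv m) \<in> carrier_mat N N" by (rule carrM[OF rvP])
      then show "f \<sigma> * (cf \<sigma> \<cdot>\<^sub>m Mf (\<sigma> \<circ> rv m)) $$ (a, b) = f \<sigma> * (cf \<sigma> * Mf (\<sigma> \<circ> rv m) $$ (a, b))"
        using a b by simp
    qed
    also have "\<dots> = (\<Sum>\<tau>\<in>Perms. f (\<tau> \<circ> rv m) * (cf (\<tau> \<circ> rv m) * Mf \<tau> $$ (a,b)))"
    proof (rule sum.reindex_bij_witness[of Perms "\<lambda>\<sigma>. \<sigma> \<circ> rv m" "\<lambda>\<sigma>. \<sigma> \<circ> rv m"])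
      fix \<sigma> assume "\<sigma> \<in> Perms"
      show "\<sigma> \<circ> rv m \<circ> rv m = \<sigma>" by (rule rv_comp)
      show "\<sigma> \<circ> rv m \<in> Perms" by (rule rvP) fact
      show "f (\<sigma> \<circ> rv m \<circ> rv m) * (cf (\<sigma> \<circ> rv m \<circ> rv m) * Mf (\<sigma> \<circ> rv m) $$ (a, b)) = f \<sigma> * (cf \<sigma> * Mf (\<sigma> \<circ> rv m) $$ (a, b))"
        by (simp only: rv_comp)
    qed (auto simp: rv_comp rvP)
    also have "\<dots> = (\<Sum>\<tau>\<in>Perms. - (f \<tau> * Mf \<tau> $$ (a,b)))"
      by (rule sum.cong[OF refl]) (simp add: mult.assoc[symmetric] sgn)
    also have "\<dots> = ((-1) \<cdot>\<^sub>m P) $$ (a,b)"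
      unfolding P_def using a b by (simp add: sum_negf)
    finally show "Q $$ (a,b) = ((-1) \<cdot>\<^sub>m P) $$ (a,b)" .
  qed (auto simp: P_def Q_def)
  have hP: "hom_mat N xt P"
    unfolding hom_mat_def
  proof (intro conjI allI impI)
    show "P \<in> carrier_mat N N" by (simp add: P_def)
    fix i j assume i: "i < N" and j: "j < N" and p: "(idx_par i \<noteq> idx_par j) \<noteq> xt"
    have "\<And>\<sigma>. \<sigma> \<in> Perms \<Longrightarrow> Mf \<sigma> $$ (i,j) = 0"
      using each i j p by (auto simp: hom_mat_def)
    then show "P $$ (i,j) = 0" unfolding P_def using i j by simp
  qed
  have oP: "osp_hom n B xt P"
    using hP CQ QP osp_hom_iff[OF B] by (simp add: N_def)
  have PC: "P \<in> carrier_mat N N" by (simp add: P_def)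
  have "in_osp n B P"
  proof (cases xt)
    case True
    then show ?thesis unfolding in_osp_def
      using oP osp_hom_zero[OF B, of False] PC by (intro exI[of _ "0\<^sub>m N N"] exI[of _ P]) (auto simp: N_def)
  next
    case False
    then show ?thesis unfolding in_osp_def
      using oP osp_hom_zero[OF B, of True] PC by (intro exI[of _ P] exI[of _ "0\<^sub>m N N"]) (auto simp: N_def)
  qed
  then show ?thesis unfolding P_def f_def Mf_def Perms_def N_def m_def .
qed


theorem lemma5p1:
  fixes n p :: nat and B :: "'a::field_char_0 mat"
  assumes "n \<ge> 1" and "osp_form n B"
  shows "(\<forall>Xs ps. length Xs = 2*p+1 \<longrightarrow> hom_osp_tuple n B Xs ps \<longrightarrow>
            in_osp n B (Pm (2*n+1) Xs ps)) \<and>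
         (\<forall>Xs ps. length Xs = 4*p+1 \<longrightarrow> hom_osp_tuple n B Xs ps \<longrightarrow>
            in_osp n B (Am (2*n+1) Xs ps)) \<and>
         (\<forall>Xs ps. length Xs = 4*p+2 \<longrightarrow> hom_osp_tuple n B Xs ps \<longrightarrow>
            in_osp n B (Am (2*n+1) Xs ps))"
proof -
  have B: "B \<in> carrier_mat (2*n+1) (2*n+1)" using assms(2) by (simp add: osp_form_def)
  have signW: "of_int (sign (\<tau> \<circ> rv m)) = (of_int (sign \<tau>) * (-1)^(m div 2) :: 'a)"
    if t: "\<tau> permutes {..<m}" for \<tau> m
  proof -
    have "sign (\<tau> \<circ> rv m) = sign \<tau> * sign (rv m)"
      by (rule sign_compose[OF permutes_imp_permutation[OF _ t] permutes_imp_permutation[OF _ rv_permutes]]) auto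
    then show ?thesis by (simp add: sign_rv)
  qed
  have P1: "in_osp n B (Pm (2*n+1) Xs ps)" if l: "length Xs = 2*p+1" and t: "hom_osp_tuple n B Xs ps" for Xs ps
  proof -
    have "in_osp n B (mat (2*n+1) (2*n+1) (\<lambda>(a,b). \<Sum>\<sigma>\<in>{\<sigma>. \<sigma> permutes {..<length Xs}}.
            (\<lambda>_. 1) \<sigma> * koszul_sign (length Xs) \<sigma> ps * mprod (2*n+1) (map (\<lambda>i. Xs ! (\<sigma> i)) [0..<length Xs]) $$ (a,b)))"
      by (rule main_gen[OF B t]) (simp add: l)
    then show ?thesis by (simp add: Pm_def Let_def)
  qed
  have A: "in_osp n B (Am (2*n+1) Xs ps)" if l: "length Xs = 4*p+1 \<or> length Xs = 4*p+2" and t: "hom_osp_tuple n B Xs ps" for Xs ps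
  proof -
    have "in_osp n B (mat (2*n+1) (2*n+1) (\<lambda>(a,b). \<Sum>\<sigma>\<in>{\<sigma>. \<sigma> permutes {..<length Xs}}.
            (\<lambda>\<sigma>. of_int (sign \<sigma>)) \<sigma> * koszul_sign (length Xs) \<sigma> ps * mprod (2*n+1) (map (\<lambda>i. Xs ! (\<sigma> i)) [0..<length Xs]) $$ (a,b)))"
    proof (rule main_gen[OF B t])
      fix \<tau> assume tp: "\<tau> permutes {..<length Xs}"
      show "of_int (sign (\<tau> \<circ> rv (length Xs))) * (-1)^(length Xs) = - (of_int (sign \<tau>) :: 'a)"
        using l
      proof
        assume l1: "length Xs = 4*p+1"
        have d: "length Xs div 2 = 2*p" using l1 by simp
        have s: "of_int (sign (\<tau> \<circ> rv (length Xs))) = (of_int (sign \<tau>) * (-1)^(2*p) :: 'a)"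
          using signW[OF tp] unfolding d .
        show ?thesis unfolding s unfolding l1 by (simp add: power_add power_mult)
      next
        assume l2: "length Xs = 4*p+2"
        have d: "length Xs div 2 = 2*p+1" using l2 by simp
        have s: "of_int (sign (\<tau> \<circ> rv (length Xs))) = (of_int (sign \<tau>) * (-1)^(2*p+1) :: 'a)"
          using signW[OF tp] unfolding d .
        show ?thesis unfolding s unfolding l2 by (simp add: power_add power_mult)
      qed
    qed
    then show ?thesis by (simp add: Am_def Let_def)
  qed
  show ?thesis using P1 A by blast
qed

end
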